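(* Let $\Gamma$ be a set of basic relations of Allen's interval algebra. If $\mathsf{m}\in\Gamma$, then $\Gamma$ implements $\mathsf{p}$. If $\mathsf{f}\in\Gamma$ and $\mathsf{s}\in\Gamma$, then $\Gamma$ implements $\mathsf{d}$ and $\Gamma$ implements $\mathsf{o}$.
   Context: Allen's interval algebra has domain $\mathbb{I}=\{[a,b] : a,b\in\mathbb{Q},\ a<b\}$; for $I=[a,b]$ write $I^-=a$, $I^+=b$. Relations: $x\,\mathsf{p}\,y$ iff $x^+<y^-$; $x\,\mathsf{m}\,y$ iff $x^+=y^-$; $x\,\mathsf{o}\,y$ iff $x^-<y^-<x^+<y^+$; $x\,\mathsf{d}\,y$ iff $y^-<x^-$ and $x^+<y^+$; $x\,\mathsf{s}\,y$ iff $x^-=y^-$ and $x^+<y^+$; $x\,\mathsf{f}\,y$ iff $x^+=y^+$ and $y^-<x^-$. A (simple) implementation of a binary relation $r$ in a constraint language $\Gamma$ is a CSP instance $\mathcal{C}_r$ over $\Gamma$ with primary variables $x_1,x_2$ and possibly auxiliary variables $y_1,\dots,y_\ell$ such that (i) every assignment satisfying $\mathcal{C}_r$ satisfies $x_1\,r\,x_2$, and (ii) every assignment to $x_1,x_2$ not satisfying $x_1\,r\,x_2$ can be extended to $y_1,\dots,y_\ell$ so that all but one constraint of $\mathcal{C}_r$ are satisfied. $\Gamma$ implements $r$ if such an implementation exists. *)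

theory Defs
  imports Main "HOL.Rat"
begin

type_synonym interval = "rat \<times> rat"

definition is_interval :: "interval \<Rightarrow> bool" where
  "is_interval I \<longleftrightarrow> fst I < snd I"

datatype allen = Pr | Me | Ov | Du | St | Fi | PrI | MeI | OvI | DuI | StI | FiI | Eq

fun holds :: "allen \<Rightarrow> interval \<Rightarrow> interval \<Rightarrow> bool" where
  "holds Pr x y \<longleftrightarrow> snd x < fst y"
| "holds Me x y \<longleftrightarrow> snd x = fst y"
| "holds Ov x y \<longleftrightarrow> fst x < fst y \<and> fst y < snd x \<and> snd x < snd y"
| "holds Du x y \<longleftrightarrow> fst y < fst x \<and> snd x < snd y"
| "holds St x y \<longleftrightarrow> fst x = fst y \<and> snd x < snd y"
| "holds Fi x y \<longleftrightarrow> snd x = snd y \<and> fst y < fst x"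
| "holds PrI x y \<longleftrightarrow> snd y < fst x"
| "holds MeI x y \<longleftrightarrow> snd y = fst x"
| "holds OvI x y \<longleftrightarrow> fst y < fst x \<and> fst x < snd y \<and> snd y < snd x"
| "holds DuI x y \<longleftrightarrow> fst x < fst y \<and> snd y < snd x"
| "holds StI x y \<longleftrightarrow> fst y = fst x \<and> snd y < snd x"
| "holds FiI x y \<longleftrightarrow> snd y = snd x \<and> fst x < fst y"
| "holds Eq x y \<longleftrightarrow> x = y"

datatype var = X1 | X2 | Y nat

text \<open>A constraint (r, u, v) means u r v.  An instance is a list of constraints
  (a multiset; duplicates are counted separately).\<close>
type_synonym constr = "allen \<times> var \<times> var"

fun sat :: "(var \<Rightarrow> interval) \<Rightarrow> constr \<Rightarrow> bool" where
  "sat \<sigma> (r, u, v) \<longleftrightarrow> holds r (\<sigma> u) (\<sigma> v)"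

definition valid_assign :: "(var \<Rightarrow> interval) \<Rightarrow> bool" where
  "valid_assign \<sigma> \<longleftrightarrow> (\<forall>v. is_interval (\<sigma> v))"

fun var_ok :: "nat \<Rightarrow> var \<Rightarrow> bool" where
  "var_ok l X1 = True"
| "var_ok l X2 = True"
| "var_ok l (Y i) = (i < l)"

definition instance_over :: "allen set \<Rightarrow> nat \<Rightarrow> constr list \<Rightarrow> bool" where
  "instance_over \<Gamma> l C \<longleftrightarrow>
     (\<forall>(r, u, v) \<in> set C. r \<in> \<Gamma> \<and> var_ok l u \<and> var_ok l v)"

definition is_implementation :: "allen set \<Rightarrow> allen \<Rightarrow> nat \<Rightarrow> constr list \<Rightarrow> bool" where
  "is_implementation \<Gamma> r l C \<longleftrightarrow>
     instance_over \<Gamma> l C \<and>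
     (\<forall>\<sigma>. valid_assign \<sigma> \<and> (\<forall>c \<in> set C. sat \<sigma> c) \<longrightarrow> holds r (\<sigma> X1) (\<sigma> X2)) \<and>
     (\<forall>a b. is_interval a \<and> is_interval b \<and> \<not> holds r a b \<longrightarrow>
        (\<exists>\<sigma>. valid_assign \<sigma> \<and> \<sigma> X1 = a \<and> \<sigma> X2 = b \<and>
             length (filter (\<lambda>c. \<not> sat \<sigma> c) C) \<le> 1))"

definition implements :: "allen set \<Rightarrow> allen \<Rightarrow> bool" where
  "implements \<Gamma> r \<longleftrightarrow> (\<exists>l C. is_implementation \<Gamma> r l C)"

end

theory Submission
  imports Defs
begin

definition asg :: "interval \<Rightarrow> interval \<Rightarrow> interval \<Rightarrow> var \<Rightarrow> interval" where
  "asg a b y v = (case v of X1 \<Rightarrow> a | X2 \<Rightarrow> b | Y _ \<Rightarrow> y)"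

lemma asg_simps[simp]: "asg a b y X1 = a" "asg a b y X2 = b" "asg a b y (Y i) = y"
  by (simp_all add: asg_def)

lemma asg_valid: "is_interval a \<Longrightarrow> is_interval b \<Longrightarrow> is_interval y \<Longrightarrow> valid_assign (asg a b y)"
  unfolding valid_assign_def by (auto simp: asg_def split: var.splits)

lemma impl_Pr: "Me \<in> \<Gamma> \<Longrightarrow> is_implementation \<Gamma> Pr 1 [(Me, X1, Y 0), (Me, Y 0, X2)]"
  unfolding is_implementation_def
proof (intro conjI allI impI)
  show "Me \<in> \<Gamma> \<Longrightarrow> instance_over \<Gamma> 1 [(Me, X1, Y 0), (Me, Y 0, X2)]"
    by (simp add: instance_over_def)
next
  fix \<sigma> :: "var \<Rightarrow> interval"
  assume h: "valid_assign \<sigma> \<and> (\<forall>c\<in>set [(Me, X1, Y 0), (Me, Y 0, X2)]. sat \<sigma> c)"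
  then have "is_interval (\<sigma> (Y 0))" by (simp add: valid_assign_def)
  with h show "holds Pr (\<sigma> X1) (\<sigma> X2)" by (simp add: is_interval_def)
next
  fix a b :: interval
  assume h: "is_interval a \<and> is_interval b \<and> \<not> holds Pr a b"
  let ?y = "(snd a, snd a + 1)"
  have "is_interval ?y" by (simp add: is_interval_def)
  then show "\<exists>\<sigma>. valid_assign \<sigma> \<and> \<sigma> X1 = a \<and> \<sigma> X2 = b \<and>
             length (filter (\<lambda>c. \<not> sat \<sigma> c) [(Me, X1, Y 0), (Me, Y 0, X2)]) \<le> 1"
    using h by (intro exI[of _ "asg a b ?y"]) (simp add: asg_valid)
qed

lemma impl_Du: "St \<in> \<Gamma> \<Longrightarrow> Fi \<in> \<Gamma> \<Longrightarrow> is_implementation \<Gamma> Du 1 [(St, Y 0, X2), (Fi, X1, Y 0)]"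
  unfolding is_implementation_def
proof (intro conjI allI impI)
  show "St \<in> \<Gamma> \<Longrightarrow> Fi \<in> \<Gamma> \<Longrightarrow> instance_over \<Gamma> 1 [(St, Y 0, X2), (Fi, X1, Y 0)]"
    by (simp add: instance_over_def)
next
  fix \<sigma> :: "var \<Rightarrow> interval"
  assume h: "valid_assign \<sigma> \<and> (\<forall>c\<in>set [(St, Y 0, X2), (Fi, X1, Y 0)]. sat \<sigma> c)"
  then show "holds Du (\<sigma> X1) (\<sigma> X2)" by auto
next
  fix a b :: interval
  assume h: "is_interval a \<and> is_interval b \<and> \<not> holds Du a b"
  let ?y = "(fst b, (fst b + snd b) / 2)"
  have "is_interval ?y" "snd ?y < snd b" using h by (auto simp add: is_interval_def field_simps)
  then show "\<exists>\<sigma>. valid_assign \<sigma> \<and> \<sigma> X1 = a \<and> \<sigma> X2 = b \<and>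
             length (filter (\<lambda>c. \<not> sat \<sigma> c) [(St, Y 0, X2), (Fi, X1, Y 0)]) \<le> 1"
    using h by (intro exI[of _ "asg a b ?y"]) (simp add: asg_valid)
qed

lemma impl_Ov: "St \<in> \<Gamma> \<Longrightarrow> Fi \<in> \<Gamma> \<Longrightarrow> is_implementation \<Gamma> Ov 1 [(St, Y 0, X2), (Fi, Y 0, X1)]"
  unfolding is_implementation_def
proof (intro conjI allI impI)
  show "St \<in> \<Gamma> \<Longrightarrow> Fi \<in> \<Gamma> \<Longrightarrow> instance_over \<Gamma> 1 [(St, Y 0, X2), (Fi, Y 0, X1)]"
    by (simp add: instance_over_def)
next
  fix \<sigma> :: "var \<Rightarrow> interval"
  assume h: "valid_assign \<sigma> \<and> (\<forall>c\<in>set [(St, Y 0, X2), (Fi, Y 0, X1)]. sat \<sigma> c)"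
  then have "is_interval (\<sigma> (Y 0))" by (simp add: valid_assign_def)
  with h show "holds Ov (\<sigma> X1) (\<sigma> X2)" by (auto simp add: is_interval_def)
next
  fix a b :: interval
  assume h: "is_interval a \<and> is_interval b \<and> \<not> holds Ov a b"
  let ?y = "(fst b, (fst b + snd b) / 2)"
  have "is_interval ?y" "snd ?y < snd b" using h by (auto simp add: is_interval_def field_simps)
  then show "\<exists>\<sigma>. valid_assign \<sigma> \<and> \<sigma> X1 = a \<and> \<sigma> X2 = b \<and>
             length (filter (\<lambda>c. \<not> sat \<sigma> c) [(St, Y 0, X2), (Fi, Y 0, X1)]) \<le> 1"
    using h by (intro exI[of _ "asg a b ?y"]) (simp add: asg_valid)
qed

theorem mainTheorem6:
  fixes \<Gamma> :: "allen set"
  shows "(Me \<in> \<Gamma> \<longrightarrow> implements \<Gamma> Pr) \<and>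
         (Fi \<in> \<Gamma> \<and> St \<in> \<Gamma> \<longrightarrow> implements \<Gamma> Du \<and> implements \<Gamma> Ov)"
  unfolding implements_def using impl_Pr impl_Du impl_Ov by blast

end
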